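(* Let $G$ be a topological groupoid such that $G^{(0)}$ is locally compact. Consider the assertions: (i) $G$ is proper; (ii) $(r,s)\colon G\to G^{(0)}\times G^{(0)}$ is closed and $G_x^x$ is quasi-compact for every $x\in G^{(0)}$; (iii) for all quasi-compact subspaces $K,L$ of $G^{(0)}$, $G_K^L$ is quasi-compact; (iii)' for all compact subspaces $K,L$ of $G^{(0)}$, $G_K^L$ is quasi-compact; (iv) for every quasi-compact subspace $K$ of $G^{(0)}$, $G_K^K$ is quasi-compact; (v) for all $x,y\in G^{(0)}$ there exist compact neighbourhoods $K_x$ of $x$ and $L_y$ of $y$ such that $G_{K_x}^{L_y}$ is quasi-compact. Then (i)$\iff$(ii)$\iff$(iii)$\iff$(iii)'$\iff$(v)$\implies$(iv). If $G^{(0)}$ is Hausdorff, then (i)–(v) are all equivalent.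
   Context: Quasi-compact: every open cover has a finite subcover; compact: quasi-compact and Hausdorff; locally compact: every point has a compact neighbourhood (not necessarily Hausdorff). A continuous map is proper if it is closed and has quasi-compact fibres. $G$ is proper if $(r,s)\colon G\to G^{(0)}\times G^{(0)}$ is proper. $G_K^L=r^{-1}(L)\cap s^{-1}(K)$, $G_x^x=G_{\{x\}}^{\{x\}}$. *)

theory Defs
  imports "HOL-Analysis.Analysis"
begin

text \<open>A topological groupoid: arrow space G, unit space X, range/source maps r s,
unit inclusion u, inverse ginv and multiplication gmult (defined on composable pairs,
i.e. s g = r h).  Quasi-compactness is the library notion compactin (no separation).\<close>

definition composable_pairs :: "'a topology \<Rightarrow> ('a \<Rightarrow> 'b) \<Rightarrow> ('a \<Rightarrow> 'b) \<Rightarrow> ('a \<times> 'a) set" where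
  "composable_pairs G r s = {(g, h). g \<in> topspace G \<and> h \<in> topspace G \<and> s g = r h}"

definition topological_groupoid ::
  "'a topology \<Rightarrow> 'b topology \<Rightarrow> ('a \<Rightarrow> 'b) \<Rightarrow> ('a \<Rightarrow> 'b) \<Rightarrow> ('b \<Rightarrow> 'a)
   \<Rightarrow> ('a \<Rightarrow> 'a) \<Rightarrow> ('a \<Rightarrow> 'a \<Rightarrow> 'a) \<Rightarrow> bool" where
  "topological_groupoid G X r s u ginv gmult \<longleftrightarrow>
     (\<forall>x\<in>topspace X. u x \<in> topspace G \<and> r (u x) = x \<and> s (u x) = x) \<and>
     (\<forall>g\<in>topspace G. r g \<in> topspace X \<and> s g \<in> topspace X) \<and>
     (\<forall>g\<in>topspace G. \<forall>h\<in>topspace G. s g = r h \<longrightarrow>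
        gmult g h \<in> topspace G \<and> r (gmult g h) = r g \<and> s (gmult g h) = s h) \<and>
     (\<forall>g\<in>topspace G. \<forall>h\<in>topspace G. \<forall>k\<in>topspace G. s g = r h \<longrightarrow> s h = r k \<longrightarrow>
        gmult (gmult g h) k = gmult g (gmult h k)) \<and>
     (\<forall>g\<in>topspace G. gmult (u (r g)) g = g \<and> gmult g (u (s g)) = g) \<and>
     (\<forall>g\<in>topspace G. ginv g \<in> topspace G \<and> r (ginv g) = s g \<and> s (ginv g) = r g \<and>
        gmult g (ginv g) = u (r g) \<and> gmult (ginv g) g = u (s g)) \<and>
     continuous_map G X r \<and> continuous_map G X s \<and> continuous_map X G u \<and>
     continuous_map G G ginv \<and>
     continuous_map (subtopology (prod_topology G G) (composable_pairs G r s)) G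
        (\<lambda>(g, h). gmult g h)"

definition compact_sub :: "'b topology \<Rightarrow> 'b set \<Rightarrow> bool" where
  "compact_sub X K \<longleftrightarrow> compactin X K \<and> Hausdorff_space (subtopology X K)"

definition nbhd :: "'b topology \<Rightarrow> 'b set \<Rightarrow> 'b \<Rightarrow> bool" where
  "nbhd X N x \<longleftrightarrow> N \<subseteq> topspace X \<and> (\<exists>U. openin X U \<and> x \<in> U \<and> U \<subseteq> N)"

definition loc_compact :: "'b topology \<Rightarrow> bool" where
  "loc_compact X \<longleftrightarrow> (\<forall>x\<in>topspace X. \<exists>K. compact_sub X K \<and> nbhd X K x)"

definition arrows_between :: "'a topology \<Rightarrow> ('a \<Rightarrow> 'b) \<Rightarrow> ('a \<Rightarrow> 'b) \<Rightarrow> 'b set \<Rightarrow> 'b set \<Rightarrow> 'a set" where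
  "arrows_between G r s K L = {g \<in> topspace G. r g \<in> L \<and> s g \<in> K}"

end

theory Submission
  imports Defs
begin

lemma closed_in_hsub:
  assumes "compactin Y Z" "Z \<subseteq> S" "Hausdorff_space (subtopology Y S)"
  shows "\<exists>T. closedin Y T \<and> Z = T \<inter> S"
proof -
  have "compactin (subtopology Y S) Z" using assms by (simp add: compactin_subtopology)
  then have "closedin (subtopology Y S) Z" using assms(3) compactin_imp_closedin by blast
  then show ?thesis by (simp add: closedin_subtopology)
qed

lemma hausdorff_times_sub:
  assumes "compact_sub X L" "compact_sub X K"
  shows "Hausdorff_space (subtopology (prod_topology X X) (L \<times> K))"
  using assms unfolding compact_sub_def subtopology_Times
  by (simp add: Hausdorff_space_prod_topology)

lemma arrows_eq:
  "arrows_between G r s K L = {g \<in> topspace G. (\<lambda>g. (r g, s g)) g \<in> L \<times> K}"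
  unfolding arrows_between_def by auto

lemma P5_closed:
  assumes cr: "continuous_map G X r" and cs: "continuous_map G X s"
    and P5: "\<forall>x\<in>topspace X. \<forall>y\<in>topspace X. \<exists>Kx Ly.
               compact_sub X Kx \<and> nbhd X Kx x \<and> compact_sub X Ly \<and> nbhd X Ly y \<and>
               compactin G (arrows_between G r s Kx Ly)"
  shows "closed_map G (prod_topology X X) (\<lambda>g. (r g, s g))"
  unfolding closed_map_def
proof (intro allI impI)
  fix C assume C: "closedin G C"
  define f where "f = (\<lambda>g. (r g, s g))"
  have cf: "continuous_map G (prod_topology X X) f" unfolding f_def using cr cs
    by (simp add: continuous_map_pairedI)
  have sub: "f ` C \<subseteq> topspace (prod_topology X X)"
  proof -
    have "C \<subseteq> topspace G" using C by (rule closedin_subset)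
    then have "f ` C \<subseteq> f ` topspace G" by (rule image_mono)
    also have "\<dots> \<subseteq> topspace (prod_topology X X)" using cf by (rule continuous_map_image_subset_topspace)
    finally show ?thesis .
  qed
  have "openin (prod_topology X X) (topspace (prod_topology X X) - f ` C)"
  proof (subst openin_subopen, intro ballI)
    fix p assume p: "p \<in> topspace (prod_topology X X) - f ` C"
    obtain y x where pyx: "p = (y, x)" by (metis surj_pair)
    have xy: "x \<in> topspace X" "y \<in> topspace X" using p unfolding pyx by auto
    obtain Kx Ly where KL: "compact_sub X Kx" "nbhd X Kx x" "compact_sub X Ly" "nbhd X Ly y"
       "compactin G (arrows_between G r s Kx Ly)"
      using P5 xy by blast
    obtain U where U: "openin X U" "y \<in> U" "U \<subseteq> Ly" using KL(4) nbhd_def by metis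
    obtain V where V: "openin X V" "x \<in> V" "V \<subseteq> Kx" using KL(2) nbhd_def by metis
    define A where "A = C \<inter> arrows_between G r s Kx Ly"
    have cA: "compactin G A" unfolding A_def using C KL(5) closed_Int_compactin by blast
    have cfA: "compactin (prod_topology X X) (f ` A)" using cA cf image_compactin by blast
    have fAs: "f ` A \<subseteq> Ly \<times> Kx" unfolding A_def f_def arrows_between_def by auto
    obtain T where T: "closedin (prod_topology X X) T" "f ` A = T \<inter> (Ly \<times> Kx)"
      using closed_in_hsub[OF cfA fAs hausdorff_times_sub[OF KL(3) KL(1)]] by blast
    have pL: "p \<in> Ly \<times> Kx" using pyx U V by auto
    have pT: "p \<notin> T"
    proof
      assume "p \<in> T"
      then have "p \<in> f ` A" using T pL by auto
      then show False using p A_def by auto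
    qed
    define W where "W = (U \<times> V) - T"
    have "openin (prod_topology X X) W" unfolding W_def using U V T
      by (simp add: openin_diff openin_prod_Times_iff)
    moreover have "p \<in> W" unfolding W_def using pyx U V pT by auto
    moreover have "W \<subseteq> topspace (prod_topology X X) - f ` C"
    proof
      fix q assume q: "q \<in> W"
      then have qt: "q \<in> topspace (prod_topology X X)"
        using calculation(1) openin_subset by blast
      have "q \<notin> f ` C"
      proof
        assume "q \<in> f ` C"
        then obtain c where c: "c \<in> C" "q = f c" by auto
        have "c \<in> topspace G" using c C closedin_subset by blast
        then have "c \<in> A" using c q U V unfolding W_def A_def f_def arrows_between_def by auto
        then have "q \<in> T" using c T by auto
        then show False using q W_def by auto
      qed
      then show "q \<in> topspace (prod_topology X X) - f ` C" using qt by auto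
    qed
    ultimately show "\<exists>T. openin (prod_topology X X) T \<and> p \<in> T \<and> T \<subseteq> topspace (prod_topology X X) - f ` C"
      by blast
  qed
  then show "closedin (prod_topology X X) ((\<lambda>g. (r g, s g)) ` C)"
    using sub unfolding closedin_def f_def by blast
qed

lemma P5_fibre:
  assumes cr: "continuous_map G X r" and cs: "continuous_map G X s"
    and P5: "\<forall>x\<in>topspace X. \<forall>y\<in>topspace X. \<exists>Kx Ly.
               compact_sub X Kx \<and> nbhd X Kx x \<and> compact_sub X Ly \<and> nbhd X Ly y \<and>
               compactin G (arrows_between G r s Kx Ly)"
    and x: "x \<in> topspace X"
  shows "compactin G (arrows_between G r s {x} {x})"
proof -
  define f where "f = (\<lambda>g. (r g, s g))"
  have cf: "continuous_map G (prod_topology X X) f" unfolding f_def using cr cs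
    by (simp add: continuous_map_pairedI)
  obtain Kx Ly where KL: "compact_sub X Kx" "nbhd X Kx x" "compact_sub X Ly" "nbhd X Ly x"
       "compactin G (arrows_between G r s Kx Ly)"
    using P5 x by blast
  have xK: "x \<in> Kx" "x \<in> Ly" using KL(2,4) unfolding nbhd_def by auto
  have c1: "compactin (prod_topology X X) {(x,x)}" using x by simp
  obtain T where T: "closedin (prod_topology X X) T" "{(x,x)} = T \<inter> (Ly \<times> Kx)"
    using closed_in_hsub[OF c1 _ hausdorff_times_sub[OF KL(3) KL(1)]] xK by blast
  have "closedin G {g \<in> topspace G. f g \<in> T}"
    using closedin_continuous_map_preimage[OF cf T(1)] .
  then have "compactin G ({g \<in> topspace G. f g \<in> T} \<inter> arrows_between G r s Kx Ly)"
    using KL(5) closed_Int_compactin by blast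
  moreover have "{g \<in> topspace G. f g \<in> T} \<inter> arrows_between G r s Kx Ly = arrows_between G r s {x} {x}"
    using T(2) xK unfolding arrows_between_def f_def by auto
  ultimately show ?thesis by simp
qed

lemma grpd_D1:
  assumes "topological_groupoid G X r s u ginv gmult"
  shows "\<forall>g\<in>topspace G. \<forall>h\<in>topspace G. s g = r h \<longrightarrow>
        gmult g h \<in> topspace G \<and> r (gmult g h) = r g \<and> s (gmult g h) = s h"
  using assms unfolding topological_groupoid_def by (elim conjE) assumption

lemma grpd_D2:
  assumes "topological_groupoid G X r s u ginv gmult"
  shows "\<forall>g\<in>topspace G. \<forall>h\<in>topspace G. \<forall>k\<in>topspace G. s g = r h \<longrightarrow> s h = r k \<longrightarrow>
        gmult (gmult g h) k = gmult g (gmult h k)"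
  using assms unfolding topological_groupoid_def by (elim conjE) assumption

lemma grpd_D3:
  assumes "topological_groupoid G X r s u ginv gmult"
  shows "\<forall>g\<in>topspace G. gmult (u (r g)) g = g"
  using assms unfolding topological_groupoid_def by (elim conjE) blast

lemma grpd_D4:
  assumes "topological_groupoid G X r s u ginv gmult"
  shows "\<forall>g\<in>topspace G. ginv g \<in> topspace G \<and> r (ginv g) = s g \<and> s (ginv g) = r g \<and>
        gmult g (ginv g) = u (r g) \<and> gmult (ginv g) g = u (s g)"
  using assms unfolding topological_groupoid_def by (elim conjE) assumption

lemma grpd_D5:
  assumes "topological_groupoid G X r s u ginv gmult"
  shows "continuous_map G X r"
  using assms unfolding topological_groupoid_def by (elim conjE) assumption

lemma grpd_D6:
  assumes "topological_groupoid G X r s u ginv gmult"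
  shows "continuous_map G X s"
  using assms unfolding topological_groupoid_def by (elim conjE) assumption

lemma grpd_D7:
  assumes "topological_groupoid G X r s u ginv gmult"
  shows "continuous_map (subtopology (prod_topology G G) (composable_pairs G r s)) G
        (\<lambda>(g, h). gmult g h)"
  using assms unfolding topological_groupoid_def by (elim conjE) assumption

lemma fibre_translate:
  assumes grpd: "topological_groupoid G X r s u ginv gmult"
    and cx: "compactin G (arrows_between G r s {x} {x})"
    and g0: "g0 \<in> topspace G" "s g0 = x" "r g0 = y"
  shows "compactin G {g \<in> topspace G. (r g, s g) = (y, x)}"
proof -
  note M = grpd_D1[OF grpd] and A = grpd_D2[OF grpd] and U = grpd_D3[OF grpd]
    and I = grpd_D4[OF grpd] and cm = grpd_D7[OF grpd]
  define H where "H = arrows_between G r s {x} {x}"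
  define phi where "phi = (\<lambda>h. gmult g0 h)"
  have cp: "continuous_map (subtopology G H) (subtopology (prod_topology G G) (composable_pairs G r s)) (\<lambda>h. (g0, h))"
  proof (rule continuous_map_into_subtopology)
    show "continuous_map (subtopology G H) (prod_topology G G) (\<lambda>h. (g0, h))"
    proof (rule continuous_map_pairedI)
      show "continuous_map (subtopology G H) G (\<lambda>h. g0)" using g0 by simp
      show "continuous_map (subtopology G H) G (\<lambda>h. h)"
        using continuous_map_id_subt[of G H] unfolding id_def .
    qed
    show "(\<lambda>h. (g0, h)) \<in> topspace (subtopology G H) \<rightarrow> composable_pairs G r s"
      using g0 unfolding H_def arrows_between_def composable_pairs_def by auto
  qed
  have "continuous_map (subtopology G H) G phi"
    using continuous_map_compose[OF cp cm] unfolding phi_def o_def by simp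
  moreover have "compactin (subtopology G H) H" using cx unfolding H_def
    by (simp add: compactin_subtopology)
  ultimately have "compactin G (phi ` H)" using image_compactin by blast
  moreover have "phi ` H = {g \<in> topspace G. (r g, s g) = (y, x)}"
  proof
    show "phi ` H \<subseteq> {g \<in> topspace G. (r g, s g) = (y, x)}"
    proof
      fix g assume "g \<in> phi ` H"
      then obtain h where h: "h \<in> topspace G" "r h = x" "s h = x" "g = gmult g0 h"
        unfolding phi_def H_def arrows_between_def by auto
      then show "g \<in> {g \<in> topspace G. (r g, s g) = (y, x)}" using M g0 by simp
    qed
    show "{g \<in> topspace G. (r g, s g) = (y, x)} \<subseteq> phi ` H"
    proof
      fix g assume g: "g \<in> {g \<in> topspace G. (r g, s g) = (y, x)}"
      define h where "h = gmult (ginv g0) g"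
      have i: "ginv g0 \<in> topspace G" "r (ginv g0) = x" "s (ginv g0) = y"
        "gmult g0 (ginv g0) = u y" using I g0 by auto
      have gG: "g \<in> topspace G" and rg: "r g = y" and sg: "s g = x" using g by auto
      have h: "h \<in> H" unfolding h_def H_def arrows_between_def using M i gG rg sg by simp
      have "gmult (gmult g0 (ginv g0)) g = gmult g0 (gmult (ginv g0) g)"
        using A[rule_format, OF g0(1) i(1) gG] g0 i rg by simp
      then have "gmult g0 h = gmult (u y) g" unfolding h_def using i by simp
      also have "\<dots> = g" using U gG rg by auto
      finally show "g \<in> phi ` H" using h unfolding phi_def by blast
    qed
  qed
  ultimately show ?thesis by simp
qed

theorem proposition2p10:
  fixes G :: "'a topology" and X :: "'b topology"
    and r s :: "'a \<Rightarrow> 'b" and u :: "'b \<Rightarrow> 'a" and ginv :: "'a \<Rightarrow> 'a"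
    and gmult :: "'a \<Rightarrow> 'a \<Rightarrow> 'a"
  assumes grpd: "topological_groupoid G X r s u ginv gmult"
    and lc: "loc_compact X"
  defines "P1 \<equiv> proper_map G (prod_topology X X) (\<lambda>g. (r g, s g))"
    and "P2 \<equiv> closed_map G (prod_topology X X) (\<lambda>g. (r g, s g)) \<and>
               (\<forall>x\<in>topspace X. compactin G (arrows_between G r s {x} {x}))"
    and "P3 \<equiv> (\<forall>K L. K \<subseteq> topspace X \<longrightarrow> L \<subseteq> topspace X \<longrightarrow> compactin X K \<longrightarrow> compactin X L
               \<longrightarrow> compactin G (arrows_between G r s K L))"
    and "P3' \<equiv> (\<forall>K L. K \<subseteq> topspace X \<longrightarrow> L \<subseteq> topspace X \<longrightarrow> compact_sub X K \<longrightarrow> compact_sub X L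
               \<longrightarrow> compactin G (arrows_between G r s K L))"
    and "P4 \<equiv> (\<forall>K. K \<subseteq> topspace X \<longrightarrow> compactin X K \<longrightarrow> compactin G (arrows_between G r s K K))"
    and "P5 \<equiv> (\<forall>x\<in>topspace X. \<forall>y\<in>topspace X. \<exists>Kx Ly.
               compact_sub X Kx \<and> nbhd X Kx x \<and> compact_sub X Ly \<and> nbhd X Ly y \<and>
               compactin G (arrows_between G r s Kx Ly))"
  shows "(P1 \<longleftrightarrow> P2) \<and> (P2 \<longleftrightarrow> P3) \<and> (P3 \<longleftrightarrow> P3') \<and> (P3' \<longleftrightarrow> P5) \<and> (P5 \<longrightarrow> P4) \<and>
         (Hausdorff_space X \<longrightarrow> (P4 \<longrightarrow> P1))"
proof -
  have cr: "continuous_map G X r" and cs: "continuous_map G X s" using grpd_D5[OF grpd] grpd_D6[OF grpd] by auto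
  have fib: "\<And>x. arrows_between G r s {x} {x} = {g \<in> topspace G. (r g, s g) = (x, x)}"
    unfolding arrows_between_def by auto
  have B: "P1 \<Longrightarrow> P2" unfolding P1_def P2_def proper_map_def using fib by auto
  have A: "P2 \<Longrightarrow> P1"
  proof -
    assume p2: P2
    have "compactin G {g \<in> topspace G. (r g, s g) = q}" if q: "q \<in> topspace (prod_topology X X)" for q
    proof -
      obtain y x where qq: "q = (y, x)" by force
      have x: "x \<in> topspace X" using q qq by auto
      show ?thesis
      proof (cases "{g \<in> topspace G. (r g, s g) = q} = {}")
        case True then show ?thesis by (metis compactin_empty)
      next
        case False
        then obtain g0 where "g0 \<in> topspace G" "r g0 = y" "s g0 = x" using qq by auto
        then show ?thesis using fibre_translate[OF grpd _ , of x g0 y] p2 x qq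
          unfolding P2_def by auto
      qed
    qed
    then show P1 using p2 unfolding P1_def P2_def proper_map_def by auto
  qed
  have C: "P1 \<Longrightarrow> P3" unfolding P1_def P3_def
  proof (intro allI impI)
    fix K L assume pm: "proper_map G (prod_topology X X) (\<lambda>g. (r g, s g))"
      and KL: "compactin X K" "compactin X L"
    have "compactin (prod_topology X X) (L \<times> K)" using KL by (simp add: compactin_Times)
    from compactin_proper_map_preimage[OF pm this]
    show "compactin G (arrows_between G r s K L)" unfolding arrows_between_def by simp
  qed
  have Dd: "P3 \<Longrightarrow> P3'" unfolding P3_def P3'_def compact_sub_def by blast
  have E: "P3' \<Longrightarrow> P5" unfolding P3'_def P5_def
  proof (intro ballI)
    fix x y assume p: "\<forall>K L. K \<subseteq> topspace X \<longrightarrow> L \<subseteq> topspace X \<longrightarrow> compact_sub X K \<longrightarrow>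
            compact_sub X L \<longrightarrow> compactin G (arrows_between G r s K L)"
      and xy: "x \<in> topspace X" "y \<in> topspace X"
    obtain Kx where Kx: "compact_sub X Kx" "nbhd X Kx x" using lc xy unfolding loc_compact_def by blast
    obtain Ly where Ly: "compact_sub X Ly" "nbhd X Ly y" using lc xy unfolding loc_compact_def by blast
    have "Kx \<subseteq> topspace X" "Ly \<subseteq> topspace X" using Kx Ly unfolding nbhd_def by auto
    then show "\<exists>Kx Ly. compact_sub X Kx \<and> nbhd X Kx x \<and> compact_sub X Ly \<and> nbhd X Ly y \<and>
               compactin G (arrows_between G r s Kx Ly)" using p Kx Ly by blast
  qed
  have F: "P5 \<Longrightarrow> P2"
  proof -
    assume "P5"
    then have p5: "\<forall>x\<in>topspace X. \<forall>y\<in>topspace X. \<exists>Kx Ly.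
               compact_sub X Kx \<and> nbhd X Kx x \<and> compact_sub X Ly \<and> nbhd X Ly y \<and>
               compactin G (arrows_between G r s Kx Ly)" unfolding P5_def .
    show P2 unfolding P2_def using P5_closed[OF cr cs p5] P5_fibre[OF cr cs p5] by blast
  qed
  have Gg: "P3 \<Longrightarrow> P4" unfolding P3_def P4_def by blast
  have H: "Hausdorff_space X \<Longrightarrow> P4 \<Longrightarrow> P3" unfolding P3_def P4_def
  proof (intro allI impI)
    fix K L assume hs: "Hausdorff_space X"
      and p4: "\<forall>K. K \<subseteq> topspace X \<longrightarrow> compactin X K \<longrightarrow> compactin G (arrows_between G r s K K)"
      and KL: "K \<subseteq> topspace X" "L \<subseteq> topspace X" "compactin X K" "compactin X L"
    have "compactin X (K \<union> L)" using KL by (simp add: compactin_Un)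
    then have cM: "compactin G (arrows_between G r s (K \<union> L) (K \<union> L))" using p4 KL by blast
    have cK: "closedin X K" using compactin_imp_closedin[OF hs KL(3)] .
    have cL: "closedin X L" using compactin_imp_closedin[OF hs KL(4)] .
    have c1: "closedin G {g \<in> topspace G. r g \<in> L}" using closedin_continuous_map_preimage[OF cr cL] .
    have c2: "closedin G {g \<in> topspace G. s g \<in> K}" using closedin_continuous_map_preimage[OF cs cK] .
    have c3: "closedin G ({g \<in> topspace G. r g \<in> L} \<inter> {g \<in> topspace G. s g \<in> K})"
      using c1 c2 by (rule closedin_Int)
    have eq: "arrows_between G r s K L = ({g \<in> topspace G. r g \<in> L} \<inter> {g \<in> topspace G. s g \<in> K})
        \<inter> arrows_between G r s (K \<union> L) (K \<union> L)"
      unfolding arrows_between_def by auto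
    show "compactin G (arrows_between G r s K L)"
      unfolding eq by (rule closed_Int_compactin[OF c3 cM])
  qed
  show ?thesis using A B C Dd E F Gg H by blast
qed

end
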